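(* For every integer $k\geq 2$ and every tree $T$, $\nu_{k}(T) \geq \frac{\nu_{k-1}(T) + \nu_{k+1}(T)}{2}$.
   Context: For $k\geq 1$, $\nu_k(T)$ is the maximum number of edges of a $k$-edge-colorable subgraph of $T$ (a subgraph whose edges can be colored with $k$ colors so that adjacent edges get distinct colors). *)

theory Defs
  imports Complex_Main
begin

definition simple_graph :: "'a set \<Rightarrow> 'a set set \<Rightarrow> bool" where
  "simple_graph V E \<longleftrightarrow> finite V \<and> (\<forall>e\<in>E. e \<subseteq> V \<and> card e = 2)"

definition adj :: "'a set set \<Rightarrow> 'a \<Rightarrow> 'a \<Rightarrow> bool" where
  "adj E u v \<longleftrightarrow> {u, v} \<in> E"

definition connected_graph :: "'a set \<Rightarrow> 'a set set \<Rightarrow> bool" where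
  "connected_graph V E \<longleftrightarrow> (\<forall>u\<in>V. \<forall>v\<in>V. (adj E)\<^sup>*\<^sup>* u v)"

definition is_cycle :: "'a set set \<Rightarrow> 'a list \<Rightarrow> bool" where
  "is_cycle E vs \<longleftrightarrow> length vs \<ge> 3 \<and> distinct vs
     \<and> (\<forall>i. Suc i < length vs \<longrightarrow> adj E (vs ! i) (vs ! Suc i))
     \<and> adj E (last vs) (hd vs)"

definition acyclic_graph :: "'a set set \<Rightarrow> bool" where
  "acyclic_graph E \<longleftrightarrow> (\<nexists>vs. is_cycle E vs)"

definition is_tree :: "'a set \<Rightarrow> 'a set set \<Rightarrow> bool" where
  "is_tree V E \<longleftrightarrow> simple_graph V E \<and> V \<noteq> {} \<and> connected_graph V E \<and> acyclic_graph E"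

definition k_edge_colorable :: "nat \<Rightarrow> 'a set set \<Rightarrow> bool" where
  "k_edge_colorable k F \<longleftrightarrow> (\<exists>c :: 'a set \<Rightarrow> nat.
      (\<forall>e\<in>F. c e < k) \<and>
      (\<forall>e\<in>F. \<forall>e'\<in>F. e \<noteq> e' \<and> e \<inter> e' \<noteq> {} \<longrightarrow> c e \<noteq> c e'))"

definition nu :: "nat \<Rightarrow> 'a set set \<Rightarrow> nat" where
  "nu k E = Max {card F | F. F \<subseteq> E \<and> k_edge_colorable k F}"

end

theory Submission
  imports Defs
begin

definition dg :: "'a set set \<Rightarrow> 'a \<Rightarrow> nat" where
  "dg F x = card {e\<in>F. x\<in>e}"

lemma acyclic_mono: "acyclic_graph F \<Longrightarrow> G \<subseteq> F \<Longrightarrow> acyclic_graph G"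
  unfolding acyclic_graph_def is_cycle_def adj_def by blast

lemma pendant:
  assumes fin: "finite F" and c2: "\<forall>e\<in>F. card e = 2" and ac: "acyclic_graph F" and ne: "F \<noteq> {}"
  shows "\<exists>u v. u \<noteq> v \<and> {u,v} \<in> F \<and> (\<forall>e\<in>F. v \<in> e \<longrightarrow> e = {u,v})"
proof -
  define S where "S = \<Union>F"
  have finS: "finite S" unfolding S_def using fin c2
    by (metis card.infinite finite_Union zero_neq_numeral)
  define P where "P = {vs. set vs \<subseteq> S \<and> distinct vs \<and> 2 \<le> length vs \<and>
      (\<forall>i. Suc i < length vs \<longrightarrow> adj F (vs!i) (vs!Suc i))}"
  have "P \<subseteq> {xs. set xs \<subseteq> S \<and> length xs \<le> card S}"
    unfolding P_def using finS by (auto simp: card_mono distinct_card[symmetric])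
  then have finP: "finite P" using finite_lists_length_le[OF finS] finite_subset by blast
  obtain e0 where "e0 \<in> F" using ne by blast
  then obtain a b where ab: "e0 = {a,b}" "a \<noteq> b" using c2 card_2_iff by metis
  have "[a,b] \<in> P" unfolding P_def S_def adj_def using ab \<open>e0 \<in> F\<close> by (auto simp: less_Suc_eq)
  then have "length ` P \<noteq> {}" by blast
  then have "Max (length ` P) \<in> length ` P" using finP by auto
  then obtain vs where vsP: "vs \<in> P" and vsM: "length vs = Max (length ` P)" by auto
  have mx: "\<And>ws. ws \<in> P \<Longrightarrow> length ws \<le> length vs"
    unfolding vsM using finP by (simp add: Max_ge)
  have len: "2 \<le> length vs" and dist: "distinct vs" and setS: "set vs \<subseteq> S"
    and adjv: "\<And>i. Suc i < length vs \<Longrightarrow> adj F (vs!i) (vs!Suc i)"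
    using vsP unfolding P_def by auto
  define v where "v = vs!0"
  define u where "u = vs!1"
  have uvF: "{u,v} \<in> F" using adjv[of 0] len unfolding u_def v_def adj_def by (auto simp: insert_commute)
  have uv: "u \<noteq> v" using dist len unfolding u_def v_def by (subst nth_eq_iff_index_eq) auto
  have "\<forall>e\<in>F. v \<in> e \<longrightarrow> e = {u,v}"
  proof (intro ballI impI)
    fix e assume eF: "e \<in> F" and ve: "v \<in> e"
    obtain w where ew: "e = {v,w}" "w \<noteq> v"
      using c2 eF ve card_2_iff by (metis insert_commute insertE singletonD)
    show "e = {u,v}"
    proof (cases "w \<in> set vs")
      case False
      have "w # vs \<in> P"
        unfolding P_def
      proof (intro CollectI conjI allI impI)
        show "set (w # vs) \<subseteq> S" using setS eF ew unfolding S_def by auto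
        show "distinct (w # vs)" using False dist by simp
        show "2 \<le> length (w # vs)" using len by simp
        fix i assume i: "Suc i < length (w # vs)"
        show "adj F ((w # vs) ! i) ((w # vs) ! Suc i)"
        proof (cases i)
          case 0 then show ?thesis using eF ew unfolding adj_def v_def by (simp add: insert_commute)
        next
          case (Suc j) then show ?thesis using adjv[of j] i by simp
        qed
      qed
      then show ?thesis using mx by fastforce
    next
      case True
      then obtain i where i: "i < length vs" "vs!i = w" by (metis in_set_conv_nth)
      have "i \<noteq> 0" using i ew unfolding v_def by (metis)
      show ?thesis
      proof (cases "i = 1")
        case True then show ?thesis using ew i unfolding u_def by (simp add: insert_commute)
      next
        case False
        have cyc: "is_cycle F (take (Suc i) vs)"
          unfolding is_cycle_def
        proof (intro conjI allI impI)
          show "3 \<le> length (take (Suc i) vs)" using False \<open>i \<noteq> 0\<close> i by simp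
          show "distinct (take (Suc i) vs)" using dist by simp
          fix j assume "Suc j < length (take (Suc i) vs)"
          then show "adj F (take (Suc i) vs ! j) (take (Suc i) vs ! Suc j)"
            using adjv[of j] i by simp
        next
          have l: "last (take (Suc i) vs) = w" using i by (simp add: take_Suc_conv_app_nth)
          have h: "hd (take (Suc i) vs) = v" using i unfolding v_def by (metis hd_conv_nth hd_take list.size(3) not_less0 zero_less_Suc)
          show "adj F (last (take (Suc i) vs)) (hd (take (Suc i) vs))"
            unfolding l h adj_def using eF ew by (simp add: insert_commute)
        qed
        then show ?thesis using ac unfolding acyclic_graph_def by blast
      qed
    qed
  qed
  then show ?thesis using uv uvF by blast
qed

lemma dg_Un: "finite X \<Longrightarrow> finite Y \<Longrightarrow> X \<inter> Y = {} \<Longrightarrow> dg (X \<union> Y) x = dg X x + dg Y x"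
proof -
  assume a: "finite X" "finite Y" "X \<inter> Y = {}"
  have "{e\<in>X \<union> Y. x\<in>e} = {e\<in>X. x\<in>e} \<union> {e\<in>Y. x\<in>e}" by blast
  then show ?thesis unfolding dg_def using a by (simp add: card_Un_disjoint disjoint_iff)
qed

lemma dg_insert: "finite R \<Longrightarrow> e \<notin> R \<Longrightarrow> dg (insert e R) x = dg R x + (if x \<in> e then 1 else 0)"
proof -
  assume a: "finite R" "e \<notin> R"
  show ?thesis
  proof (cases "x \<in> e")
    case True
    then have "{f\<in>insert e R. x\<in>f} = insert e {f\<in>R. x\<in>f}" by auto
    then show ?thesis unfolding dg_def using a True by simp
  next
    case False
    then have "{f\<in>insert e R. x\<in>f} = {f\<in>R. x\<in>f}" by auto
    then show ?thesis unfolding dg_def using a False by simp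
  qed
qed

lemma colorable_dg:
  assumes "k_edge_colorable k F" "finite F"
  shows "dg F x \<le> k"
proof -
  obtain c where c1: "\<forall>e\<in>F. c e < k" and c2: "\<forall>e\<in>F. \<forall>e'\<in>F. e \<noteq> e' \<and> e \<inter> e' \<noteq> {} \<longrightarrow> c e \<noteq> c e'"
    using assms unfolding k_edge_colorable_def by blast
  have "inj_on c {e\<in>F. x\<in>e}" using c2 by (auto simp: inj_on_def)
  moreover have "c ` {e\<in>F. x\<in>e} \<subseteq> {..<k}" using c1 by auto
  ultimately have "card {e\<in>F. x\<in>e} \<le> card {..<k}" by (intro card_inj_on_le) auto
  then show ?thesis unfolding dg_def by simp
qed

lemma forest_colorable:
  assumes "finite F" "\<forall>e\<in>F. card e = 2" "acyclic_graph F" "\<forall>x. dg F x \<le> k"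
  shows "k_edge_colorable k F"
  using assms
proof (induction F rule: finite_psubset_induct)
  case (psubset F)
  show ?case
  proof (cases "F = {}")
    case True then show ?thesis unfolding k_edge_colorable_def by auto
  next
    case False
    then obtain u v where uv: "u \<noteq> v" "{u,v} \<in> F" and pend: "\<forall>e\<in>F. v \<in> e \<longrightarrow> e = {u,v}"
      using pendant[of F] psubset.prems(1,2) psubset.hyps(1) False by blast
    define e where "e = {u,v}"
    define F' where "F' = F - {e}"
    have F: "F = insert e F'" "e \<notin> F'" using uv unfolding F'_def e_def by auto
    have finF': "finite F'" using psubset.hyps unfolding F'_def by simp
    have "k_edge_colorable k F'"
    proof (rule psubset.IH)
      show "F' \<subset> F" using F by auto
      show "\<forall>e\<in>F'. card e = 2" using psubset.prems unfolding F'_def by auto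
      show "acyclic_graph F'" using psubset.prems acyclic_mono unfolding F'_def by blast
      show "\<forall>x. dg F' x \<le> k" using psubset.prems F dg_insert[OF finF' F(2)]
        by (metis le_add1 le_trans)
    qed
    then obtain c where c1: "\<forall>e\<in>F'. c e < k" and c2: "\<forall>e\<in>F'. \<forall>e'\<in>F'. e \<noteq> e' \<and> e \<inter> e' \<noteq> {} \<longrightarrow> c e \<noteq> c e'"
      unfolding k_edge_colorable_def by blast
    define U where "U = {f\<in>F'. u\<in>f}"
    have "dg F u = card U + 1" using dg_insert[OF finF' F(2), of u] F unfolding U_def dg_def e_def by simp
    then have cU: "card U < k" using psubset.prems by (metis Suc_eq_plus1 Suc_le_lessD)
    have finU: "finite U" using finF' unfolding U_def by simp
    have "card (c ` U) < card {..<k}" using cU card_image_le[OF finU, of c] by simp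
    have "\<not> ({..<k} \<subseteq> c ` U)"
    proof
      assume "{..<k} \<subseteq> c ` U"
      then have "card {..<k} \<le> card (c ` U)" using finU by (intro card_mono) auto
      with \<open>card (c ` U) < card {..<k}\<close> show False by simp
    qed
    then obtain col where col: "col \<in> {..<k}" "col \<notin> c ` U" by blast
    define c' where "c' = c(e := col)"
    show ?thesis unfolding k_edge_colorable_def
    proof (intro exI[of _ c'] conjI ballI impI)
      fix f assume "f \<in> F" then show "c' f < k" using c1 col F unfolding c'_def by auto
    next
      fix f f' assume ff: "f \<in> F" "f' \<in> F" "f \<noteq> f' \<and> f \<inter> f' \<noteq> {}"
      have key: "g \<in> F' \<Longrightarrow> g \<inter> e \<noteq> {} \<Longrightarrow> c g \<noteq> col" for g
      proof -
        assume g: "g \<in> F'" "g \<inter> e \<noteq> {}"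
        have "v \<notin> g" using pend g F unfolding F'_def e_def by auto
        then have "u \<in> g" using g unfolding e_def by auto
        then have "g \<in> U" using g unfolding U_def by auto
        then show ?thesis using col by auto
      qed
      show "c' f \<noteq> c' f'"
      proof (cases "f = e")
        case True
        then have "f' \<in> F'" using ff F by auto
        then show ?thesis using key[of f'] ff True unfolding c'_def by (auto simp: F(2) Int_commute)
      next
        case False
        show ?thesis
        proof (cases "f' = e")
          case True
          then have "f \<in> F'" using ff F False by auto
          then show ?thesis using key[of f] ff True unfolding c'_def by (auto simp: F(2))
        next
          case False2: False
          then show ?thesis using c2 ff False F unfolding c'_def by auto
        qed
      qed
    qed
  qed
qed


lemma forest_balanced:
  assumes "finite F" "\<forall>e\<in>F. card e = 2" "acyclic_graph F"
  shows "\<exists>R\<subseteq>F. \<forall>x. dg R x \<le> dg (F - R) x + 1 \<and> dg (F - R) x \<le> dg R x + 1"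
  using assms
proof (induction F rule: finite_psubset_induct)
  case (psubset F)
  show ?case
  proof (cases "F = {}")
    case True then show ?thesis by (auto simp: dg_def)
  next
    case False
    then obtain u v where uv: "u \<noteq> v" "{u,v} \<in> F" and pend: "\<forall>e\<in>F. v \<in> e \<longrightarrow> e = {u,v}"
      using pendant[of F] psubset.prems(1,2) psubset.hyps(1) False by blast
    define e where "e = {u,v}"
    define F' where "F' = F - {e}"
    have F: "F = insert e F'" "e \<notin> F'" using uv unfolding F'_def e_def by auto
    have finF': "finite F'" using psubset.hyps unfolding F'_def by simp
    have "\<exists>R\<subseteq>F'. \<forall>x. dg R x \<le> dg (F' - R) x + 1 \<and> dg (F' - R) x \<le> dg R x + 1"
    proof (rule psubset.IH)
      show "F' \<subset> F" using F by auto
      show "\<forall>e\<in>F'. card e = 2" using psubset.prems unfolding F'_def by auto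
      show "acyclic_graph F'" using psubset.prems acyclic_mono unfolding F'_def by blast
    qed
    then obtain R where R: "R \<subseteq> F'" and bal: "\<And>x. dg R x \<le> dg (F' - R) x + 1 \<and> dg (F' - R) x \<le> dg R x + 1"
      by blast
    have finR: "finite R" using R finF' finite_subset by blast
    have finD: "finite (F' - R)" using finF' by simp
    have eR: "e \<notin> R" "e \<notin> F' - R" using R F by auto
    have "{f\<in>F'. v \<in> f} = {}" using pend unfolding F'_def e_def by auto
    then have "{f\<in>R. v \<in> f} = {}" "{f\<in>F' - R. v \<in> f} = {}" using R by auto
    then have v0: "dg R v = 0" "dg (F' - R) v = 0" unfolding dg_def by (metis card.empty)+
    show ?thesis
    proof (cases "dg R u \<le> dg (F' - R) u")
      case True
      have FR: "F - insert e R = F' - R" using F by auto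
      show ?thesis
      proof (rule exI[of _ "insert e R"], rule conjI)
        show "insert e R \<subseteq> F" using F R by auto
        show "\<forall>x. dg (insert e R) x \<le> dg (F - insert e R) x + 1 \<and> dg (F - insert e R) x \<le> dg (insert e R) x + 1"
        proof
        fix x
        show "dg (insert e R) x \<le> dg (F - insert e R) x + 1 \<and> dg (F - insert e R) x \<le> dg (insert e R) x + 1"
          unfolding FR dg_insert[OF finR eR(1)] using bal[of x] True v0 uv
          by (cases "x = v"; cases "x = u"; auto simp: e_def)
      qed
      qed
    next
      case False
      have FR: "F - R = insert e (F' - R)" using F R by auto
      show ?thesis
      proof (rule exI[of _ R], rule conjI)
        show "R \<subseteq> F" using F R by auto
        show "\<forall>x. dg R x \<le> dg (F - R) x + 1 \<and> dg (F - R) x \<le> dg R x + 1"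
        proof
        fix x
        show "dg R x \<le> dg (F - R) x + 1 \<and> dg (F - R) x \<le> dg R x + 1"
          unfolding FR dg_insert[OF finD eR(2)] using bal[of x] False v0 uv
          by (cases "x = v"; cases "x = u"; auto simp: e_def)
      qed
      qed
    qed
  qed
qed

lemma nu_props:
  assumes fin: "finite E"
  shows "\<exists>A\<subseteq>E. k_edge_colorable m A \<and> card A = nu m E"
    and "H \<subseteq> E \<Longrightarrow> k_edge_colorable m H \<Longrightarrow> card H \<le> nu m E"
proof -
  let ?S = "{card F |F. F \<subseteq> E \<and> k_edge_colorable m F}"
  have "?S = card ` {F. F \<subseteq> E \<and> k_edge_colorable m F}" by blast
  then have finS: "finite ?S" using fin by simp
  have "0 \<in> ?S" unfolding k_edge_colorable_def by (intro CollectI exI[of _ "{}"]) auto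
  then have "Max ?S \<in> ?S" using finS by (intro Max_in) auto
  then show "\<exists>A\<subseteq>E. k_edge_colorable m A \<and> card A = nu m E" unfolding nu_def by auto
  show "H \<subseteq> E \<Longrightarrow> k_edge_colorable m H \<Longrightarrow> card H \<le> nu m E"
    unfolding nu_def using finS by (intro Max_ge) auto
qed

theorem corollary1:
  fixes k :: nat and V :: "'a set" and E :: "'a set set"
  assumes "k \<ge> 2" and "is_tree V E"
  shows "real (nu k E) \<ge> (real (nu (k - 1) E) + real (nu (k + 1) E)) / 2"
proof -
  have sg: "simple_graph V E" and acE: "acyclic_graph E" using assms(2) unfolding is_tree_def by auto
  have finE: "finite E" using sg unfolding simple_graph_def by (meson Pow_iff finite_Pow_iff finite_subset subsetI)
  have c2E: "\<forall>e\<in>E. card e = 2" using sg unfolding simple_graph_def by auto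
  obtain A where A: "A \<subseteq> E" "k_edge_colorable (k - 1) A" "card A = nu (k - 1) E"
    using nu_props(1)[OF finE] by blast
  obtain B where B: "B \<subseteq> E" "k_edge_colorable (k + 1) B" "card B = nu (k + 1) E"
    using nu_props(1)[OF finE] by blast
  have finA: "finite A" and finB: "finite B" using A B finE finite_subset by auto
  define C where "C = A \<inter> B"
  define D where "D = (A - B) \<union> (B - A)"
  have DE: "D \<subseteq> E" using A B unfolding D_def by auto
  have finD: "finite D" using DE finE finite_subset by blast
  obtain R where R: "R \<subseteq> D" and bal: "\<And>x. dg R x \<le> dg (D - R) x + 1 \<and> dg (D - R) x \<le> dg R x + 1"
    using forest_balanced[OF finD] c2E DE acyclic_mono[OF acE DE] by blast
  have finC: "finite C" using finA unfolding C_def by simp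
  have finR: "finite R" using R finD finite_subset by blast
  have finDR: "finite (D - R)" using finD by simp
  have CR: "C \<inter> R = {}" "C \<inter> (D - R) = {}" using R unfolding C_def D_def by auto
  have degA: "dg A x = dg C x + dg (A - B) x" for x
  proof -
    have "A = C \<union> (A - B)" unfolding C_def by auto
    then show ?thesis using dg_Un[OF finC _, of "A - B" x] finA unfolding C_def by auto
  qed
  have degB: "dg B x = dg C x + dg (B - A) x" for x
  proof -
    have "B = C \<union> (B - A)" unfolding C_def by auto
    then show ?thesis using dg_Un[OF finC _, of "B - A" x] finB unfolding C_def by auto
  qed
  have degD: "dg D x = dg (A - B) x + dg (B - A) x" for x
    unfolding D_def using dg_Un[of "A - B" "B - A" x] finA finB by auto
  have degD2: "dg D x = dg R x + dg (D - R) x" for x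
  proof -
    have "D = R \<union> (D - R)" using R by auto
    then show ?thesis using dg_Un[OF finR finDR, of x] by auto
  qed
  have H1: "dg (C \<union> R) x = dg C x + dg R x" for x using dg_Un[OF finC finR CR(1)] .
  have H2: "dg (C \<union> (D - R)) x = dg C x + dg (D - R) x" for x using dg_Un[OF finC finDR CR(2)] .
  have dA: "dg A x \<le> k - 1" for x using colorable_dg[OF A(2) finA] .
  have dB: "dg B x \<le> k + 1" for x using colorable_dg[OF B(2) finB] .
  have b1: "dg (C \<union> R) x \<le> k" for x
    using H1[of x] dA[of x] dB[of x] degA[of x] degB[of x] degD[of x] degD2[of x] bal[of x] assms(1) by linarith
  have b2: "dg (C \<union> (D - R)) x \<le> k" for x
    using H2[of x] dA[of x] dB[of x] degA[of x] degB[of x] degD[of x] degD2[of x] bal[of x] assms(1) by linarith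
  have sub1: "C \<union> R \<subseteq> E" using R DE A unfolding C_def by auto
  have sub2: "C \<union> (D - R) \<subseteq> E" using DE A unfolding C_def by auto
  have col1: "k_edge_colorable k (C \<union> R)"
    using forest_colorable[of "C \<union> R" k] sub1 finE c2E acyclic_mono[OF acE sub1] b1 finite_subset by blast
  have col2: "k_edge_colorable k (C \<union> (D - R))"
    using forest_colorable[of "C \<union> (D - R)" k] sub2 finE c2E acyclic_mono[OF acE sub2] b2 finite_subset by blast
  have n1: "card (C \<union> R) \<le> nu k E" using nu_props(2)[OF finE sub1 col1] .
  have n2: "card (C \<union> (D - R)) \<le> nu k E" using nu_props(2)[OF finE sub2 col2] .
  have cA: "card A = card C + card (A - B)"
  proof -
    have "A = C \<union> (A - B)" unfolding C_def by auto
    then show ?thesis using card_Un_disjoint[OF finC, of "A - B"] finA unfolding C_def by auto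
  qed
  have cB: "card B = card C + card (B - A)"
  proof -
    have "B = C \<union> (B - A)" unfolding C_def by auto
    then show ?thesis using card_Un_disjoint[OF finC, of "B - A"] finB unfolding C_def by auto
  qed
  have cD: "card D = card (A - B) + card (B - A)"
    unfolding D_def using card_Un_disjoint[of "A - B" "B - A"] finA finB by auto
  have cD2: "card D = card R + card (D - R)"
    using card_Un_disjoint[OF finR finDR] R by (metis Diff_disjoint Diff_partition)
  have c1: "card (C \<union> R) = card C + card R" using card_Un_disjoint[OF finC finR CR(1)] .
  have c2: "card (C \<union> (D - R)) = card C + card (D - R)" using card_Un_disjoint[OF finC finDR CR(2)] .
  have "nu (k - 1) E + nu (k + 1) E \<le> 2 * nu k E"
    using A(3) B(3) cA cB cD cD2 c1 c2 n1 n2 by linarith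
  then have "real (nu (k - 1) E + nu (k + 1) E) \<le> real (2 * nu k E)" by (simp only: of_nat_le_iff)
  then show ?thesis by simp
qed

end
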